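(* Let $h\in[n+1]^d$ with $\mathcal Y^h\ne\emptyset$. Then for every $t\in\mathbb{R}^d_+$, \[ \hat\Phi^{\mathrm{lwc}}(t;h)=\max_{1\le j\le d}\Big\{\frac{t_j}{r_j(h_j)}-\min\Big\{\frac{\hat\mu_j(0)}{\hat\sigma_j(0)},\ \lim_{z_j\uparrow\omega_j(\hat Q^{\mathrm{gwc}}_{1-\alpha})}\frac{\hat\mu_j(z_j)}{\hat\sigma_j(z_j)}\Big\}\Big\}, \] where $r_j(h_j)=\hat\sigma_j$ if $E^{(h_j-1)}_j\le\hat\mu_j<U^{h_j}_j$, and $r_j(h_j)=\min\{\hat\sigma_j(E^{(h_j-1)}_j),\hat\sigma_j(U^{h_j}_j)\}$ otherwise (the limit is $z_j\to\infty$ when $\omega_j(\hat Q^{\mathrm{gwc}}_{1-\alpha})=+\infty$).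
   Context: Setting: $n\ge2$, $d\ge1$, $\alpha\in(0,1)$. Calibration residuals $E^1,\dots,E^n\in\mathbb{R}^d_+$ with, for each $j$, pairwise distinct coordinates $E^1_j,\dots,E^n_j$; test input $X^{n+1}\in\mathcal X$ and a residual function $E:\mathcal X\times\mathbb{R}^d\to\mathbb{R}^d$. $\hat Q_{1-\alpha}(x_1,\dots,x_n)$: the $\lceil(1-\alpha)(n+1)\rceil$-th smallest value of $\{x_1,\dots,x_n,+\infty\}$. $\hat\mu_j=\frac1n\sum_{i=1}^nE^i_j$, $\hat\sigma_j=\sqrt{\frac1n\sum_{i=1}^n(E^i_j-\hat\mu_j)^2}$; for $z\ge0$, $\hat\mu_j(z)=\frac{\sum_{i=1}^nE^i_j+z}{n+1}$, $\hat\sigma_j(z)=\sqrt{\frac{\sum_{i=1}^n(E^i_j-\hat\mu_j(z))^2+(z-\hat\mu_j(z))^2}{n}}$. Link functions: $\omega_j(c)=0$ if $c\le-\frac n{\sqrt{n+1}}$; $\max\{0,\hat\mu_j-\hat\sigma_j|c|\sqrt{\tfrac{(n+1)^2}{n^2-(n+1)c^2}}\}$ if $-\frac n{\sqrt{n+1}}<c<0$; $\hat\mu_j+\hat\sigma_j|c|\sqrt{\tfrac{(n+1)^2}{n^2-(n+1)c^2}}$ if $0\le c<\frac n{\sqrt{n+1}}$; $+\infty$ if $c\ge\frac n{\sqrt{n+1}}$. GWC: $\hat\Phi^{\mathrm{gwc}}(t)=\max_j\sup_{z_j\ge0}\frac{t_j-\hat\mu_j(z_j)}{\hat\sigma_j(z_j)}$,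 $\hat Q^{\mathrm{gwc}}_{1-\alpha}=\hat Q_{1-\alpha}(\hat\Phi^{\mathrm{gwc}}(E^1),\dots,\hat\Phi^{\mathrm{gwc}}(E^n))$, $\mathcal E^{\mathrm{gwc}}=\prod_{j=1}^d[0,\omega_j(\hat Q^{\mathrm{gwc}}_{1-\alpha})]$ (interpreted as $[0,\infty)$ when $\omega_j=+\infty$). Partition: $E^{(k)}_j$ is the $k$-th smallest of $E^1_j,\dots,E^n_j$ for $k\in[n]$, with $E^{(0)}_j:=0$, $E^{(n+1)}_j:=+\infty$. For $h\in[n+1]^d$: $U^{h_j}_j:=\min\{E^{(h_j)}_j,\omega_j(\hat Q^{\mathrm{gwc}}_{1-\alpha})\}$, $R^h:=\prod_{j=1}^d[E^{(h_j-1)}_j,U^{h_j}_j)$, $\mathcal Y^h:=\{y\in\mathbb{R}^d:E(X^{n+1},y)\in R^h\}$. LWC transformation: $\hat\Phi^{\mathrm{lwc}}(t;h):=\max_{1\le j\le d}\Big\{\sup_{z\in R^h}\frac{t_j}{\hat\sigma_j(z_j)}-\inf_{z\in\mathcal E^{\mathrm{gwc}}}\frac{\hat\mu_j(z_j)}{\hat\sigma_j(z_j)}\Big\}$. *)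

theory Defs
  imports "HOL-Analysis.Analysis"
begin

(* Conventions: calibration residuals are E :: nat => nat => real, E i j = E^i_j,
   with i in {1..n}, j in {1..d}.  Vectors in R^d are functions nat => real,
   only coordinates 1..d are relevant. *)

definition mu_hat :: "(nat \<Rightarrow> nat \<Rightarrow> real) \<Rightarrow> nat \<Rightarrow> nat \<Rightarrow> real" where
  "mu_hat E n j = (\<Sum>i=1..n. E i j) / real n"

definition sigma_hat :: "(nat \<Rightarrow> nat \<Rightarrow> real) \<Rightarrow> nat \<Rightarrow> nat \<Rightarrow> real" where
  "sigma_hat E n j = sqrt ((\<Sum>i=1..n. (E i j - mu_hat E n j)^2) / real n)"

definition mu_z :: "(nat \<Rightarrow> nat \<Rightarrow> real) \<Rightarrow> nat \<Rightarrow> nat \<Rightarrow> real \<Rightarrow> real" where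
  "mu_z E n j z = ((\<Sum>i=1..n. E i j) + z) / (real n + 1)"

definition sigma_z :: "(nat \<Rightarrow> nat \<Rightarrow> real) \<Rightarrow> nat \<Rightarrow> nat \<Rightarrow> real \<Rightarrow> real" where
  "sigma_z E n j z = sqrt (((\<Sum>i=1..n. (E i j - mu_z E n j z)^2) + (z - mu_z E n j z)^2) / real n)"

definition omega :: "(nat \<Rightarrow> nat \<Rightarrow> real) \<Rightarrow> nat \<Rightarrow> nat \<Rightarrow> ereal \<Rightarrow> ereal" where
  "omega E n j c =
     (if c \<le> ereal (- (real n / sqrt (real n + 1))) then 0
      else if c \<ge> ereal (real n / sqrt (real n + 1)) then \<infinity>
      else (let c' = real_of_ereal c;
                k = \<bar>c'\<bar> * sqrt ((real n + 1)^2 / ((real n)^2 - (real n + 1) * c'^2))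
            in if c' < 0 then ereal (max 0 (mu_hat E n j - sigma_hat E n j * k))
               else ereal (mu_hat E n j + sigma_hat E n j * k)))"

definition Qhat :: "real \<Rightarrow> nat \<Rightarrow> (nat \<Rightarrow> ereal) \<Rightarrow> ereal" where
  "Qhat alpha n x = sort (map x [1..<n+1] @ [\<infinity>]) ! (nat \<lceil>(1 - alpha) * (real n + 1)\<rceil> - 1)"

definition Phi_gwc :: "(nat \<Rightarrow> nat \<Rightarrow> real) \<Rightarrow> nat \<Rightarrow> nat \<Rightarrow> (nat \<Rightarrow> real) \<Rightarrow> ereal" where
  "Phi_gwc E n d t = Max ((\<lambda>j. SUP z\<in>{0::real..}. ereal ((t j - mu_z E n j z) / sigma_z E n j z)) ` {1..d})"

definition Q_gwc :: "(nat \<Rightarrow> nat \<Rightarrow> real) \<Rightarrow> nat \<Rightarrow> nat \<Rightarrow> real \<Rightarrow> ereal" where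
  "Q_gwc E n d alpha = Qhat alpha n (\<lambda>i. Phi_gwc E n d (\<lambda>j. E i j))"

definition omegaQ :: "(nat \<Rightarrow> nat \<Rightarrow> real) \<Rightarrow> nat \<Rightarrow> nat \<Rightarrow> real \<Rightarrow> nat \<Rightarrow> ereal" where
  "omegaQ E n d alpha j = omega E n j (Q_gwc E n d alpha)"

definition E_gwc :: "(nat \<Rightarrow> nat \<Rightarrow> real) \<Rightarrow> nat \<Rightarrow> nat \<Rightarrow> real \<Rightarrow> (nat \<Rightarrow> real) set" where
  "E_gwc E n d alpha = {z. \<forall>j\<in>{1..d}. 0 \<le> z j \<and> ereal (z j) \<le> omegaQ E n d alpha j}"

definition Eord :: "(nat \<Rightarrow> nat \<Rightarrow> real) \<Rightarrow> nat \<Rightarrow> nat \<Rightarrow> nat \<Rightarrow> ereal" where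
  "Eord E n j k = (if k = 0 then 0
                   else if k \<le> n then ereal (sort (map (\<lambda>i. E i j) [1..<n+1]) ! (k - 1))
                   else \<infinity>)"

definition Ucell :: "(nat \<Rightarrow> nat \<Rightarrow> real) \<Rightarrow> nat \<Rightarrow> nat \<Rightarrow> real \<Rightarrow> nat \<Rightarrow> nat \<Rightarrow> ereal" where
  "Ucell E n d alpha j k = min (Eord E n j k) (omegaQ E n d alpha j)"

definition Rcell :: "(nat \<Rightarrow> nat \<Rightarrow> real) \<Rightarrow> nat \<Rightarrow> nat \<Rightarrow> real \<Rightarrow> (nat \<Rightarrow> nat) \<Rightarrow> (nat \<Rightarrow> real) set" where
  "Rcell E n d alpha h = {z. \<forall>j\<in>{1..d}. Eord E n j (h j - 1) \<le> ereal (z j) \<and> ereal (z j) < Ucell E n d alpha j (h j)}"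

definition Ycell :: "(nat \<Rightarrow> nat \<Rightarrow> real) \<Rightarrow> nat \<Rightarrow> nat \<Rightarrow> real \<Rightarrow> ('x \<Rightarrow> (nat \<Rightarrow> real) \<Rightarrow> (nat \<Rightarrow> real)) \<Rightarrow> 'x \<Rightarrow> (nat \<Rightarrow> nat) \<Rightarrow> (nat \<Rightarrow> real) set" where
  "Ycell E n d alpha Res X h = {y. (\<forall>j. j \<notin> {1..d} \<longrightarrow> y j = 0) \<and> Res X y \<in> Rcell E n d alpha h}"

definition Phi_lwc :: "(nat \<Rightarrow> nat \<Rightarrow> real) \<Rightarrow> nat \<Rightarrow> nat \<Rightarrow> real \<Rightarrow> (nat \<Rightarrow> real) \<Rightarrow> (nat \<Rightarrow> nat) \<Rightarrow> ereal" where
  "Phi_lwc E n d alpha t h = Max ((\<lambda>j.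
      (SUP z\<in>Rcell E n d alpha h. ereal (t j / sigma_z E n j (z j)))
    - (INF z\<in>E_gwc E n d alpha. ereal (mu_z E n j (z j) / sigma_z E n j (z j)))) ` {1..d})"

definition sigma_ext :: "(nat \<Rightarrow> nat \<Rightarrow> real) \<Rightarrow> nat \<Rightarrow> nat \<Rightarrow> ereal \<Rightarrow> ereal" where
  "sigma_ext E n j u = (if u = \<infinity> then \<infinity> else ereal (sigma_z E n j (real_of_ereal u)))"

definition r_fun :: "(nat \<Rightarrow> nat \<Rightarrow> real) \<Rightarrow> nat \<Rightarrow> nat \<Rightarrow> real \<Rightarrow> nat \<Rightarrow> nat \<Rightarrow> ereal" where
  "r_fun E n d alpha j k =
     (if Eord E n j (k - 1) \<le> ereal (mu_hat E n j) \<and> ereal (mu_hat E n j) < Ucell E n d alpha j k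
      then ereal (sigma_hat E n j)
      else min (sigma_ext E n j (Eord E n j (k - 1))) (sigma_ext E n j (Ucell E n d alpha j k)))"

definition ratio_lim :: "(nat \<Rightarrow> nat \<Rightarrow> real) \<Rightarrow> nat \<Rightarrow> nat \<Rightarrow> real \<Rightarrow> nat \<Rightarrow> real" where
  "ratio_lim E n d alpha j =
     (if omegaQ E n d alpha j = \<infinity>
      then Lim at_top (\<lambda>z. mu_z E n j z / sigma_z E n j z)
      else Lim (at_left (real_of_ereal (omegaQ E n d alpha j))) (\<lambda>z. mu_z E n j z / sigma_z E n j z))"

end

theory Submission
  imports Defs "HOL-Real_Asymp.Real_Asymp"
begin

lemma mu_z_eq: "n > 0 \<Longrightarrow> mu_z E n j z = (real n * mu_hat E n j + z) / (real n + 1)"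
  by (simp add: mu_z_def mu_hat_def)

lemma aux_id: "N \<ge> 0 \<Longrightarrow> N * (w/(N+1))^2 + (N*w/(N+1))^2 = N*w^2/(N+1::real)"
proof -
  assume N: "N \<ge> 0"
  have "N * (w/(N+1))^2 + (N*w/(N+1))^2 = (N*w^2 + N^2*w^2)/(N+1)^2"
    by (simp add: power_divide power_mult_distrib add_divide_distrib)
  also have "N*w^2 + N^2*w^2 = (N*w^2)*(N+1)" by (simp add: power2_eq_square algebra_simps)
  also have "(N*w^2)*(N+1)/(N+1)^2 = N*w^2/(N+1)" using N by (simp add: power2_eq_square)
  finally show ?thesis .
qed

lemma sz_eq:
  assumes "n > 0"
  shows "sigma_z E n j z = sqrt ((sigma_hat E n j)^2 + (z - mu_hat E n j)^2 / (real n + 1))"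
proof -
  define e where "e = (\<lambda>i. E i j)"
  define s where "s = (\<Sum>i=1..n. e i)"
  define \<mu> where "\<mu> = s / real n"
  define m where "m = (s + z) / (real n + 1)"
  define Q where "Q = (\<Sum>i=1..n. (e i - \<mu>)^2)"
  have Qnn: "Q \<ge> 0" unfolding Q_def by (simp add: sum_nonneg)
  have mh: "mu_hat E n j = \<mu>" by (simp add: mu_hat_def \<mu>_def s_def e_def)
  have sh2: "(sigma_hat E n j)^2 = Q / real n"
    unfolding sigma_hat_def mh using Qnn by (simp add: Q_def e_def)
  have mz: "mu_z E n j z = m" by (simp add: mu_z_def m_def s_def e_def)
  have s0: "(\<Sum>i=1..n. (e i - \<mu>)) = 0"
    using assms by (simp add: sum_subtractf \<mu>_def s_def)
  have "(\<Sum>i=1..n. (e i - m)^2) = (\<Sum>i=1..n. (e i - \<mu>)^2 + 2*(\<mu>-m)*(e i - \<mu>) + (\<mu>-m)^2)"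
    by (rule sum.cong) (auto simp: power2_eq_square algebra_simps)
  also have "\<dots> = Q + 2*(\<mu>-m)*(\<Sum>i=1..n. (e i - \<mu>)) + real n*(\<mu>-m)^2"
    by (simp add: sum.distrib sum_distrib_left Q_def)
  also have "\<dots> = Q + real n*(\<mu>-m)^2" using s0 by simp
  finally have A: "(\<Sum>i=1..n. (e i - m)^2) = Q + real n*(\<mu>-m)^2" .
  have sm: "s = real n * \<mu>" using assms by (simp add: \<mu>_def)
  have d1: "\<mu> - m = (\<mu> - z) / (real n + 1)" unfolding m_def sm by (simp add: field_simps)
  have d2: "z - m = real n * (z - \<mu>) / (real n + 1)" unfolding m_def sm by (simp add: field_simps)
  have B: "(Q + real n*(\<mu>-m)^2 + (z - m)^2) / real n = Q / real n + (z - \<mu>)^2 / (real n + 1)"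
  proof -
    have "real n*(\<mu>-m)^2 + (z - m)^2 = real n * (z-\<mu>)^2 / (real n + 1)"
    proof -
      have "((\<mu> - z)/(real n+1))^2 = ((z-\<mu>)/(real n+1))^2" by (simp add: power_divide power2_commute)
      then show ?thesis unfolding d1 d2 using aux_id[of "real n" "z - \<mu>"] by simp
    qed
    then show ?thesis using assms by (simp add: add_divide_distrib add.assoc)
  qed
  show ?thesis
    unfolding sigma_z_def mz sh2 mh using A B by (simp add: e_def)
qed

lemma sigma_hat_pos:
  assumes n: "n \<ge> 2" and inj: "inj_on (\<lambda>i. E i j) {1..n}"
  shows "sigma_hat E n j > 0"
proof -
  define \<mu> where "\<mu> = mu_hat E n j"
  define Q where "Q = (\<Sum>i=1..n. (E i j - \<mu>)^2)"
  have "Q \<noteq> 0"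
  proof
    assume "Q = 0"
    then have "\<forall>i\<in>{1..n}. (E i j - \<mu>)^2 = 0"
      unfolding Q_def by (subst (asm) sum_nonneg_eq_0_iff) auto
    then have "E 1 j = \<mu>" "E 2 j = \<mu>" using n by auto
    moreover have "E 1 j \<noteq> E 2 j" using inj n unfolding inj_on_def by force
    ultimately show False by simp
  qed
  moreover have "Q \<ge> 0" unfolding Q_def by (simp add: sum_nonneg)
  ultimately have "Q > 0" by simp
  then show ?thesis using n unfolding sigma_hat_def Q_def \<mu>_def by simp
qed

lemma sz_pos: "n \<ge> 2 \<Longrightarrow> inj_on (\<lambda>i. E i j) {1..n} \<Longrightarrow> sigma_z E n j z > 0"
  using sigma_hat_pos[of n E j] by (simp add: sz_eq add_pos_nonneg)

lemma sz_ge: "n \<ge> 2 \<Longrightarrow> inj_on (\<lambda>i. E i j) {1..n} \<Longrightarrow> sigma_z E n j z \<ge> sigma_hat E n j"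
  using sigma_hat_pos[of n E j] by (simp add: sz_eq real_le_rsqrt)

lemma sz_hat: "n > 0 \<Longrightarrow> inj_on (\<lambda>i. E i j) {1..n} \<Longrightarrow> sigma_z E n j (mu_hat E n j) = sigma_hat E n j"
  by (simp add: sz_eq sigma_hat_def sum_nonneg)

lemma sz_mono_r: "n > 0 \<Longrightarrow> mu_hat E n j \<le> x \<Longrightarrow> x \<le> y \<Longrightarrow> sigma_z E n j x \<le> sigma_z E n j y"
  by (simp add: sz_eq divide_right_mono power_mono)

lemma sz_mono_l: "n > 0 \<Longrightarrow> x \<le> mu_hat E n j \<Longrightarrow> y \<le> x \<Longrightarrow> sigma_z E n j x \<le> sigma_z E n j y"
proof -
  assume a: "n > 0" "x \<le> mu_hat E n j" "y \<le> x"
  have "(x - mu_hat E n j)^2 \<le> (y - mu_hat E n j)^2"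
    using a by (simp add: power2_commute[of x] power2_commute[of y] power_mono)
  then show ?thesis using a by (simp add: sz_eq divide_right_mono)
qed

lemma cvx_sqrt:
  fixes a b p q u v :: real
  assumes "a \<ge> 0" "b \<ge> 0" "p \<ge> 0" "q \<ge> 0" "p + q = 1"
  shows "sqrt (a + b*(p*u+q * v)^2) \<le> p * sqrt(a+b*u^2) + q * sqrt(a+b * v^2)"
proof -
  define A where "A = a+b*u^2"
  define B where "B = a+b * v^2"
  have A0: "A \<ge> 0" "B \<ge> 0" using assms by (auto simp: A_def B_def)
  have AB: "A*B - (a+b*u * v)^2 = a*b*(u-v)^2" unfolding A_def B_def by (simp add: power2_eq_square algebra_simps)
  have "a*b*(u-v)^2 \<ge> 0" using assms by simp
  hence "(a+b*u * v)^2 \<le> A*B" using AB by linarith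
  hence "\<bar>a+b*u * v\<bar> \<le> sqrt (A*B)" using real_le_rsqrt by (metis real_sqrt_abs real_sqrt_le_iff)
  hence C: "a+b*u * v \<le> sqrt A * sqrt B" by (simp add: real_sqrt_mult)
  have "(p * sqrt A + q * sqrt B)^2 = p^2*A + q^2*B + 2*p*q*(sqrt A * sqrt B)"
    using A0 by (simp add: power2_eq_square algebra_simps)
  also have "\<dots> \<ge> p^2*A + q^2*B + 2*p*q*(a+b*u * v)"
    using C assms by (simp add: mult_left_mono)
  finally have D: "p^2*A + q^2*B + 2*p*q*(a+b*u * v) \<le> (p * sqrt A + q * sqrt B)^2" .
  have E: "p^2*A + q^2*B + 2*p*q*(a+b*u * v) = (p+q)^2*a + b*(p*u+q * v)^2"
    unfolding A_def B_def by (simp add: power2_eq_square algebra_simps)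
  have "a + b*(p*u+q * v)^2 \<le> (p * sqrt A + q * sqrt B)^2" using D E assms by simp
  moreover have "p * sqrt A + q * sqrt B \<ge> 0" using assms A0 by simp
  ultimately show ?thesis unfolding A_def[symmetric] B_def[symmetric] using real_le_lsqrt
    by (metis real_sqrt_le_iff real_sqrt_unique)
qed

lemma sz_cvx:
  assumes n: "n > 0" and pq: "p \<ge> 0" "q \<ge> 0" "p + q = 1"
  shows "sigma_z E n j (p * x + q * y) \<le> p * sigma_z E n j x + q * sigma_z E n j y"
proof -
  define m where "m = mu_hat E n j"
  define a where "a = (sigma_hat E n j)^2"
  define b where "b = 1 / (real n + 1)"
  have e: "\<And>w. sigma_z E n j w = sqrt (a + b * (w - m)^2)"
    using n by (simp add: sz_eq a_def b_def m_def)
  have "p * x + q * y - m = p * x + q * y - (p + q) * m" using pq by simp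
  also have "\<dots> = p * (x - m) + q * (y - m)" by (simp add: algebra_simps)
  finally have "p * x + q * y - m = p * (x - m) + q * (y - m)" .
  then show ?thesis unfolding e using cvx_sqrt[of a b p q "x - m" "y - m"] pq
    by (simp add: a_def b_def)
qed

lemma qc:
  assumes n: "n \<ge> 2" and inj: "inj_on (\<lambda>i. E i j) {1..n}" and mu0: "mu_hat E n j \<ge> 0"
    and xz: "0 \<le> x" "x \<le> z" "z \<le> y"
  shows "min (mu_z E n j x / sigma_z E n j x) (mu_z E n j y / sigma_z E n j y)
         \<le> mu_z E n j z / sigma_z E n j z"
proof (cases "x = y")
  case True
  then have "z = x" using xz by simp
  then show ?thesis by simp
next
  case False
  define L where "L = mu_z E n j"
  define g where "g = sigma_z E n j"
  define c where "c = min (L x / g x) (L y / g y)"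
  define q where "q = (z - x) / (y - x)"
  define p where "p = 1 - q"
  have n0: "n > 0" using n by simp
  have gpos: "\<And>w. g w > 0" unfolding g_def using sz_pos[of n E j, OF n inj] by simp
  have Lnn: "\<And>w. w \<ge> 0 \<Longrightarrow> L w \<ge> 0" unfolding L_def using mu0 n0 by (simp add: mu_z_eq)
  have yx: "y > x" using False xz by simp
  have q01: "q \<ge> 0" "q \<le> 1" using yx xz by (auto simp: q_def divide_simps)
  have qq: "q * (y - x) = z - x" using yx by (simp add: q_def)
  have zpq: "z = p * x + q * y" using qq unfolding p_def by (simp add: algebra_simps)
  have Laff: "L z = p * L x + q * L y"
  proof -
    define A where "A = real n * mu_hat E n j"
    define D where "D = real n + 1"
    have "p * L x + q * L y = (p * (A + x) + q * (A + y)) / D"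
      unfolding L_def mu_z_eq[OF n0] A_def[symmetric] D_def[symmetric] by (simp add: add_divide_distrib[symmetric] times_divide_eq_right)
    also have "p * (A + x) + q * (A + y) = (p + q) * A + (p * x + q * y)" by (simp add: algebra_simps)
    also have "\<dots> = A + z" using zpq by (simp add: p_def)
    finally show ?thesis unfolding L_def mu_z_eq[OF n0] A_def D_def by simp
  qed
  have c0: "c \<ge> 0" unfolding c_def using Lnn gpos xz by (simp add: less_imp_le)
  have cx: "c * g x \<le> L x" using gpos[of x] unfolding c_def by (simp add: pos_le_divide_eq[symmetric])
  have cy: "c * g y \<le> L y" using gpos[of y] unfolding c_def by (simp add: pos_le_divide_eq[symmetric])
  have "c * g z \<le> c * (p * g x + q * g y)"
    using sz_cvx[OF n0, of p q E j x y] q01 c0 zpq unfolding g_def p_def by (simp add: mult_left_mono)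
  also have "\<dots> = p * (c * g x) + q * (c * g y)" by (simp add: algebra_simps)
  also have "\<dots> \<le> p * L x + q * L y"
    using cx cy q01 by (intro add_mono mult_left_mono) (auto simp: p_def)
  finally have "c * g z \<le> L z" using Laff by simp
  then have "c \<le> L z / g z" using gpos[of z] by (simp add: pos_le_divide_eq)
  then show ?thesis unfolding c_def L_def g_def .
qed

lemma ratio_cont:
  assumes n: "n \<ge> 2" and inj: "inj_on (\<lambda>i. E i j) {1..n}"
  shows "continuous_on UNIV (\<lambda>z. mu_z E n j z / sigma_z E n j z)"
proof -
  have n0: "n > 0" using n by simp
  have sp: "\<And>z. (sigma_hat E n j)^2 + (z - mu_hat E n j)^2 / (real n + 1) \<noteq> 0"
    using sz_pos[of n E j, OF n inj] n0 by (metis less_irrefl real_sqrt_zero sz_eq)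
  show ?thesis
    unfolding mu_z_eq[OF n0] sz_eq[OF n0]
    using sp by (intro continuous_intros) auto
qed

lemma ratio_lim_top:
  assumes n: "n \<ge> 2" and inj: "inj_on (\<lambda>i. E i j) {1..n}"
  shows "((\<lambda>z. mu_z E n j z / sigma_z E n j z) \<longlongrightarrow> 1 / sqrt (real n + 1)) at_top"
proof -
  have n0: "n > 0" using n by simp
  define m where "m = mu_hat E n j"
  define a where "a = (sigma_hat E n j)^2"
  define N where "N = real n"
  have a0: "a > 0" using sigma_hat_pos[of n E j, OF n inj] by (simp add: a_def)
  have N0: "N > 0" using n0 by (simp add: N_def)
  have "((\<lambda>z. ((N * m + z) / (N + 1)) / sqrt (a + (z - m)^2 / (N + 1))) \<longlongrightarrow> 1 / sqrt (N + 1)) at_top"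
  proof -
    have lim: "((\<lambda>z. ((N * m + z) / (N + 1)) / sqrt (a + (z - m)^2 / (N + 1))) \<longlongrightarrow>
       inverse (N + 1) * inverse (inverse (N + 1) powr (1 / 2))) at_top"
      using a0 N0 by real_asymp
    have s2: "sqrt (N+1)^2 = N + 1" "sqrt (N+1) > 0" using N0 by auto
    have "inverse (N + 1) * inverse (inverse (N + 1) powr (1 / 2)) = inverse (N+1) * sqrt (N+1)"
      using N0 by (simp add: powr_half_sqrt real_sqrt_inverse)
    also have "\<dots> = 1 / sqrt (N+1)" using s2 by (simp add: field_simps power2_eq_square)
    finally show ?thesis using lim by simp
  qed
  then show ?thesis unfolding mu_z_eq[OF n0] sz_eq[OF n0] by (simp add: m_def a_def N_def)
qed

lemma omega_nonneg: "mu_hat E n j \<ge> 0 \<Longrightarrow> omega E n j c \<ge> 0"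
proof -
  assume m: "mu_hat E n j \<ge> 0"
  have sg: "sigma_hat E n j \<ge> 0" by (simp add: sigma_hat_def sum_nonneg)
  define N where "N = real n"
  define s where "s = sqrt (N + 1)"
  have s0: "s > 0" unfolding s_def N_def by simp
  show ?thesis
  proof (cases "c \<le> ereal (- (N / s)) \<or> c \<ge> ereal (N / s)")
    case True
    then show ?thesis unfolding omega_def N_def[symmetric] s_def[symmetric] by auto
  next
    case False
    then obtain x where x: "c = ereal x" by (cases c) auto
    have x1: "x < N / s" "- (N / s) < x" using False x by auto
    show ?thesis
    proof (cases "x < 0")
      case True
      then show ?thesis using False unfolding omega_def N_def[symmetric] s_def[symmetric] x Let_def
        by (auto simp: le_max_iff_disj zero_ereal_def)
    next
      case xn: False
      have "x * s < N" using x1 s0 by (simp add: pos_less_divide_eq)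
      moreover have "0 \<le> x * s" using xn s0 by simp
      ultimately have "(x * s)^2 < N^2" by (simp add: power_strict_mono)
      moreover have "s^2 = N + 1" unfolding s_def N_def by simp
      ultimately have "(N + 1) * x^2 < N^2" by (simp add: power_mult_distrib algebra_simps)
      then have pos: "N^2 - (N+1) * x^2 > 0" by simp
      have k: "0 \<le> \<bar>x\<bar> * sqrt ((N + 1)^2 / (N^2 - (N + 1) * x^2))"
        using pos by (intro mult_nonneg_nonneg) auto
      show ?thesis using False xn unfolding omega_def N_def[symmetric] s_def[symmetric] x Let_def
        using m sg k by simp
    qed
  qed
qed

lemma inf_part:
  assumes n: "n \<ge> 2" and inj: "inj_on (\<lambda>i. E i j) {1..n}" and mu0: "mu_hat E n j \<ge> 0"
    and j: "j \<in> {1..d}" and om: "\<forall>j'\<in>{1..d}. omegaQ E n d alpha j' \<ge> 0"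
  shows "(INF z\<in>E_gwc E n d alpha. ereal (mu_z E n j (z j) / sigma_z E n j (z j)))
       = ereal (min (mu_z E n j 0 / sigma_z E n j 0) (ratio_lim E n d alpha j))"
proof -
  define F where "F = (\<lambda>w. mu_z E n j w / sigma_z E n j w)"
  define \<omega> where "\<omega> = omegaQ E n d alpha j"
  define RL where "RL = ratio_lim E n d alpha j"
  define I where "I = (INF z\<in>E_gwc E n d alpha. ereal (F (z j)))"
  have cont: "continuous_on UNIV F" unfolding F_def by (rule ratio_cont[of n E j, OF n inj])
  have mem: "(\<lambda>i. if i = j then w else 0) \<in> E_gwc E n d alpha" if "0 \<le> w" "ereal w \<le> \<omega>" for w
    using that om unfolding E_gwc_def \<omega>_def by (auto simp: zero_ereal_def)
  have I0: "I \<le> ereal (F 0)"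
    unfolding I_def by (rule INF_lower2[OF mem[of 0]]) (use om j in \<open>auto simp: \<omega>_def zero_ereal_def\<close>)
  have \<omega>0: "\<omega> \<ge> 0" using om j by (simp add: \<omega>_def)
  have main: "(\<forall>w. 0 \<le> w \<and> ereal w \<le> \<omega> \<longrightarrow> min (F 0) RL \<le> F w) \<and> I \<le> ereal RL"
  proof (cases "\<omega> = \<infinity>")
    case True
    have lim: "(F \<longlongrightarrow> 1 / sqrt (real n + 1)) at_top" unfolding F_def by (rule ratio_lim_top[of n E j, OF n inj])
    have RL: "RL = 1 / sqrt (real n + 1)"
      unfolding RL_def ratio_lim_def using True \<omega>_def lim[unfolded F_def] by (simp add: tendsto_Lim)
    have A: "min (F 0) RL \<le> F w" if "0 \<le> w" for w
    proof (rule tendsto_upperbound)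
      show "((\<lambda>y. min (F 0) (F y)) \<longlongrightarrow> min (F 0) RL) at_top"
        unfolding RL by (intro tendsto_intros lim)
      show "\<forall>\<^sub>F y in at_top. min (F 0) (F y) \<le> F w"
        using eventually_ge_at_top[of w] by eventually_elim (use qc[of n E j, OF n inj mu0, of 0 w] that in \<open>auto simp: F_def\<close>)
    qed simp
    have B: "I \<le> ereal RL"
    proof (rule tendsto_lowerbound)
      show "((\<lambda>y. ereal (F y)) \<longlongrightarrow> ereal RL) at_top" unfolding RL using lim by simp
      show "\<forall>\<^sub>F y in at_top. I \<le> ereal (F y)"
        using eventually_ge_at_top[of 0] proof eventually_elim
        case (elim y)
        then show ?case unfolding I_def by (intro INF_lower2[OF mem[of y]]) (auto simp: True)
      qed
    qed simp
    show ?thesis using A B by auto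
  next
    case False
    then obtain r where r: "\<omega> = ereal r" using \<omega>0 by (cases \<omega>) auto
    have r0: "r \<ge> 0" using \<omega>0 r by simp
    have "(F \<longlongrightarrow> F r) (at r)" using cont by (simp add: continuous_on_def)
    then have "(F \<longlongrightarrow> F r) (at_left r)" by (rule tendsto_mono[rotated]) (simp add: at_le)
    then have RL: "RL = F r"
      unfolding RL_def ratio_lim_def using False r \<omega>_def by (simp add: tendsto_Lim F_def)
    have A: "min (F 0) RL \<le> F w" if "0 \<le> w" "ereal w \<le> \<omega>" for w
      using qc[of n E j, OF n inj mu0, of 0 w r] that r unfolding RL F_def by simp
    have B: "I \<le> ereal RL" unfolding I_def RL by (rule INF_lower2[OF mem[of r]]) (use r r0 in auto)
    show ?thesis using A B by auto
  qed
  have "ereal (min (F 0) RL) \<le> I"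
    unfolding I_def
  proof (rule INF_greatest)
    fix z assume "z \<in> E_gwc E n d alpha"
    then have "0 \<le> z j" "ereal (z j) \<le> \<omega>" using j by (auto simp: E_gwc_def \<omega>_def)
    then have "min (F 0) RL \<le> F (z j)" using main by blast
    then show "ereal (min (F 0) RL) \<le> ereal (F (z j))" by (subst ereal_less_eq(3))
  qed
  moreover have "I \<le> ereal (min (F 0) RL)" using I0 main by (simp add: min_def)
  ultimately show ?thesis unfolding I_def F_def RL_def by (rule antisym[rotated])
qed

lemma sup_part:
  assumes n: "n \<ge> 2" and inj: "inj_on (\<lambda>i. E i j) {1..n}" and t0: "t \<ge> 0"
    and aU: "ereal a < U"
  shows "(SUP w\<in>{w. ereal a \<le> ereal w \<and> ereal w < U}. ereal (t / sigma_z E n j w))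
    = ereal t / (if ereal a \<le> ereal (mu_hat E n j) \<and> ereal (mu_hat E n j) < U then ereal (sigma_hat E n j)
                 else min (sigma_ext E n j (ereal a)) (sigma_ext E n j U))"
proof -
  define g where "g = sigma_z E n j"
  define m where "m = mu_hat E n j"
  define S where "S = {w. ereal a \<le> ereal w \<and> ereal w < U}"
  have n0: "n > 0" using n by simp
  have gpos: "\<And>w. g w > 0" unfolding g_def using sz_pos[of n E j, OF n inj] by simp
  have ub: "(SUP w\<in>S. ereal (t / g w)) \<le> ereal (t / c)" if c0: "c > 0" and cle: "\<forall>w\<in>S. c \<le> g w" for c
  proof (rule SUP_least)
    fix w assume "w \<in> S"
    then have "c \<le> g w" using cle by blast
    then have "t / g w \<le> t / c" using c0 t0 by (intro divide_left_mono) auto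
    then show "ereal (t / g w) \<le> ereal (t / c)" by simp
  qed
  have att: "ereal (t / g w) \<le> (SUP w\<in>S. ereal (t / g w))" if "w \<in> S" for w
    using that by (rule SUP_upper)
  have aS: "a \<in> S" using aU by (simp add: S_def)
  have "(SUP w\<in>S. ereal (t / g w)) = ereal t / (if ereal a \<le> ereal m \<and> ereal m < U then ereal (sigma_hat E n j)
                 else min (sigma_ext E n j (ereal a)) (sigma_ext E n j U))"
  proof (cases "ereal a \<le> ereal m \<and> ereal m < U")
    case True
    have c0: "sigma_hat E n j > 0" using sigma_hat_pos[of n E j, OF n inj] .
    have mS: "m \<in> S" using True by (simp add: S_def)
    have "(SUP w\<in>S. ereal (t / g w)) = ereal (t / sigma_hat E n j)"
    proof (rule antisym)
      show "(SUP w\<in>S. ereal (t / g w)) \<le> ereal (t / sigma_hat E n j)"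
        using c0 sz_ge[of n E j, OF n inj] by (intro ub) (auto simp: g_def)
      show "ereal (t / sigma_hat E n j) \<le> (SUP w\<in>S. ereal (t / g w))"
        using att[OF mS] sz_hat[of n E j, OF n0 inj] by (simp add: g_def m_def)
    qed
    then show ?thesis using True c0 by simp
  next
    case False
    show ?thesis
    proof (cases "m < a")
      case ma: True
      have r: "min (sigma_ext E n j (ereal a)) (sigma_ext E n j U) = ereal (g a)"
      proof (cases U)
        case (real u)
        have "g a \<le> g u" unfolding g_def using ma aU real n0 by (intro sz_mono_r) (auto simp: m_def)
        then show ?thesis using real by (simp add: sigma_ext_def g_def)
      next
        case PInf
        then show ?thesis by (simp add: sigma_ext_def g_def)
      next
        case MInf
        then show ?thesis using aU by simp
      qed
      have "(SUP w\<in>S. ereal (t / g w)) = ereal (t / g a)"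
      proof (rule antisym)
        show "(SUP w\<in>S. ereal (t / g w)) \<le> ereal (t / g a)"
          using gpos ma n0 by (intro ub) (auto simp: g_def S_def m_def intro: sz_mono_r)
        show "ereal (t / g a) \<le> (SUP w\<in>S. ereal (t / g w))" using att[OF aS] .
      qed
      then show ?thesis unfolding if_not_P[OF False] r using gpos[of a] by simp
    next
      case am: False
      then have Um: "U \<le> ereal m" using False by auto
      then obtain u where u: "U = ereal u" using aU by (cases U) auto
      have au: "a < u" "u \<le> m" using aU Um u by auto
      have r: "min (sigma_ext E n j (ereal a)) (sigma_ext E n j U) = ereal (g u)"
      proof -
        have "g u \<le> g a" unfolding g_def using au n0 by (intro sz_mono_l) (auto simp: m_def)
        then show ?thesis using u by (simp add: sigma_ext_def g_def)
      qed
      have "(SUP w\<in>S. ereal (t / g w)) = ereal (t / g u)"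
      proof (rule antisym)
        show "(SUP w\<in>S. ereal (t / g w)) \<le> ereal (t / g u)"
          using gpos au n0 by (intro ub) (auto simp: g_def S_def m_def u intro: sz_mono_l)
        show "ereal (t / g u) \<le> (SUP w\<in>S. ereal (t / g w))"
        proof (rule tendsto_upperbound)
          have "(g \<longlongrightarrow> g u) (at_left u)"
            unfolding g_def sz_eq[OF n0] by (intro tendsto_intros) (simp add: add_pos_nonneg)
          then show "((\<lambda>w. ereal (t / g w)) \<longlongrightarrow> ereal (t / g u)) (at_left u)"
            using gpos[of u] by (intro tendsto_intros) auto
          show "\<forall>\<^sub>F w in at_left u. ereal (t / g w) \<le> (SUP w\<in>S. ereal (t / g w))"
            using eventually_at_left_real[OF au(1)] proof eventually_elim
            case (elim w)
            then have "w \<in> S" using u by (auto simp: S_def)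
            then show ?case by (rule att)
          qed
        qed simp
      qed
      then show ?thesis unfolding if_not_P[OF False] r using gpos[of u] by simp
    qed
  qed
  then show ?thesis unfolding g_def m_def S_def .
qed

theorem lemma3p6:
  fixes n d :: nat and alpha :: real
    and E :: "nat \<Rightarrow> nat \<Rightarrow> real"
    and Res :: "'x \<Rightarrow> (nat \<Rightarrow> real) \<Rightarrow> (nat \<Rightarrow> real)" and X :: 'x
    and h :: "nat \<Rightarrow> nat" and t :: "nat \<Rightarrow> real"
  assumes "n \<ge> 2" and "d \<ge> 1" and "0 < alpha" and "alpha < 1"
    and "\<forall>i\<in>{1..n}. \<forall>j\<in>{1..d}. 0 \<le> E i j"
    and "\<forall>j\<in>{1..d}. inj_on (\<lambda>i. E i j) {1..n}"
    and "\<forall>j\<in>{1..d}. 1 \<le> h j \<and> h j \<le> n + 1"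
    and "Ycell E n d alpha Res X h \<noteq> {}"
    and "\<forall>j\<in>{1..d}. 0 \<le> t j"
  shows "Phi_lwc E n d alpha t h =
    Max ((\<lambda>j. ereal (t j) / r_fun E n d alpha j (h j)
        - ereal (min (mu_z E n j 0 / sigma_z E n j 0) (ratio_lim E n d alpha j))) ` {1..d})"
proof -
  note n = assms(1) and E0 = assms(5) and inj = assms(6) and hj = assms(7) and t0 = assms(9)
  obtain y where "y \<in> Ycell E n d alpha Res X h" using assms(8) by blast
  then have z0: "Res X y \<in> Rcell E n d alpha h" by (simp add: Ycell_def)
  define z0 where "z0 = Res X y"
  have mu0: "mu_hat E n j \<ge> 0" if "j \<in> {1..d}" for j
    using E0 that unfolding mu_hat_def by (auto intro!: divide_nonneg_nonneg sum_nonneg)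
  have om: "\<forall>j'\<in>{1..d}. omegaQ E n d alpha j' \<ge> 0"
    using mu0 omega_nonneg unfolding omegaQ_def by blast
  have eq: "(SUP z\<in>Rcell E n d alpha h. ereal (t j / sigma_z E n j (z j)))
    - (INF z\<in>E_gwc E n d alpha. ereal (mu_z E n j (z j) / sigma_z E n j (z j)))
    = ereal (t j) / r_fun E n d alpha j (h j)
        - ereal (min (mu_z E n j 0 / sigma_z E n j 0) (ratio_lim E n d alpha j))"
    if j: "j \<in> {1..d}" for j
  proof -
    have injj: "inj_on (\<lambda>i. E i j) {1..n}" using inj j by blast
    have "h j \<le> n + 1" using hj j by blast
    then have hl: "h j - 1 \<le> n" by simp
    have "\<exists>a. Eord E n j (h j - 1) = ereal a" unfolding Eord_def using hl by (auto simp: zero_ereal_def)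
    then obtain a where a: "Eord E n j (h j - 1) = ereal a" by blast
    define U where "U = Ucell E n d alpha j (h j)"
    have "Eord E n j (h j - 1) \<le> ereal (Res X y j) \<and> ereal (Res X y j) < Ucell E n d alpha j (h j)"
      using z0 j unfolding Rcell_def by blast
    then have aU: "ereal a < U" unfolding a U_def using order_le_less_trans by blast
    have img: "(\<lambda>z. z j) ` Rcell E n d alpha h = {w. ereal a \<le> ereal w \<and> ereal w < U}"
    proof
      show "(\<lambda>z. z j) ` Rcell E n d alpha h \<subseteq> {w. ereal a \<le> ereal w \<and> ereal w < U}"
        using j a unfolding Rcell_def U_def by force
      show "{w. ereal a \<le> ereal w \<and> ereal w < U} \<subseteq> (\<lambda>z. z j) ` Rcell E n d alpha h"
      proof
        fix w assume w: "w \<in> {w. ereal a \<le> ereal w \<and> ereal w < U}"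
        have "z0(j := w) \<in> Rcell E n d alpha h"
          using z0 w a unfolding Rcell_def U_def z0_def by auto
        then show "w \<in> (\<lambda>z. z j) ` Rcell E n d alpha h" by (intro image_eqI[of _ _ "z0(j := w)"]) auto
      qed
    qed
    have "(SUP z\<in>Rcell E n d alpha h. ereal (t j / sigma_z E n j (z j)))
        = (SUP w\<in>(\<lambda>z. z j) ` Rcell E n d alpha h. ereal (t j / sigma_z E n j w))"
      by (simp add: image_image)
    also have "\<dots> = ereal (t j) / r_fun E n d alpha j (h j)"
      unfolding img r_fun_def a U_def[symmetric]
      using sup_part[of n E j "t j" a U, OF n injj _ aU] t0 j by simp
    finally have S: "(SUP z\<in>Rcell E n d alpha h. ereal (t j / sigma_z E n j (z j)))
        = ereal (t j) / r_fun E n d alpha j (h j)" .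
    show ?thesis unfolding S inf_part[of n E j d alpha, OF n injj mu0[OF j] j om] ..
  qed
  show ?thesis unfolding Phi_lwc_def using eq by (intro arg_cong[where f = Max] image_cong) auto
qed

end
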